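(* Let $X=(B\,|\,A)\in\mathbb{Z}^{d\times N}$ be a matrix of full rank $d$ in $B$-basic form, with $B\in\mathbb{Z}^{d\times d}$ a diagonal matrix of full rank with non-negative entries and $A\in\mathbb{Z}^{d\times(N-d)}$. Let $P=\{p_1,\dots,p_{N-\kappa(A)}\}$ be a coordinatizing path and $\sigma\in\{-1,1\}^{N-\kappa(A)}$. If $X'=(B\,|\,A')$ and $X''=(B\,|\,A'')$ both represent the same arithmetic matroid as $X$ and, for every $j$, the entries of $A'$ and of $A''$ at position $p_j$ both equal $\sigma_j$ times the corresponding entry of $A$, then $X'=X''$.
   Context: The arithmetic matroid represented by $X\in\mathbb{Z}^{d\times N}$ with columns $x_1,\dots,x_N$ is $([N],\operatorname{rk},m)$ where $\operatorname{rk}(S)$ is the dimension of the real span $\langle S\rangle_{\mathbb{R}}$ of $\{x_e:e\in S\}$ and $m(S)=|(\langle S\rangle_{\mathbb{R}}\cap\mathbb{Z}^d)/\langle S\rangle|$, with $\langle S\rangle$ the subgroup generated by $\{x_e:e\in S\}$. Index the columns of $A$ by $d+1,\dots,N$. Let $\mathcal{G}_A$ be the bipartite graph on vertices $\{r_1,\dots,r_d\}\cup\{c_{d+1},\dots,c_N\}$ with an edge $\{r_i,c_j\}$ iff $a_{ij}\ne 0$; edges are identified with the non-zero entries of $A$. $\kappa(A)$ is the number of connected components of $\mathcal{G}_A$. A coordinatizing path is the set of entries of $A$ corresponding to the edges of a spanning forest of $\mathcal{G}_A$. *)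

theory Defs
  imports "HOL-Analysis.Analysis"
begin

text \<open>Rows are indexed by a finite type 'd (so d = CARD('d)); the columns of B are
  indexed by 'd, the columns of A by a finite type 'a (so N - d = CARD('a)).\<close>

definition blockmat :: "('d \<Rightarrow> 'd \<Rightarrow> int) \<Rightarrow> ('d \<Rightarrow> 'a \<Rightarrow> int) \<Rightarrow> 'd \<Rightarrow> ('d + 'a) \<Rightarrow> int" where
  "blockmat B A = (\<lambda>i e. case e of Inl k \<Rightarrow> B i k | Inr j \<Rightarrow> A i j)"

definition colR :: "('d::finite \<Rightarrow> 'e \<Rightarrow> int) \<Rightarrow> 'e \<Rightarrow> real ^ 'd" where
  "colR X e = (\<chi> i. real_of_int (X i e))"

definition int_lattice :: "(real ^ 'd::finite) set" where
  "int_lattice = {v. \<forall>i. v $ i \<in> \<int>}"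

definition int_gen :: "('d::finite \<Rightarrow> 'e \<Rightarrow> int) \<Rightarrow> 'e set \<Rightarrow> (real ^ 'd) set" where
  "int_gen X S = {v. \<exists>T c. finite T \<and> T \<subseteq> S \<and> v = (\<Sum>e\<in>T. of_int (c e) *\<^sub>R colR X e)}"

definition mrk :: "('d::finite \<Rightarrow> 'e \<Rightarrow> int) \<Rightarrow> 'e set \<Rightarrow> nat" where
  "mrk X S = dim (span (colR X ` S))"

text \<open>Multiplicity: cardinality of the quotient group (span_R(S) \<inter> Z^d) / <S>,
  i.e. the number of cosets of <S> in span_R(S) \<inter> Z^d.\<close>
definition mult :: "('d::finite \<Rightarrow> 'e \<Rightarrow> int) \<Rightarrow> 'e set \<Rightarrow> nat" where
  "mult X S = card ((\<lambda>v. (\<lambda>w. v + w) ` int_gen X S) ` (span (colR X ` S) \<inter> int_lattice))"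

definition same_arith_matroid :: "('d::finite \<Rightarrow> 'e \<Rightarrow> int) \<Rightarrow> ('d \<Rightarrow> 'e \<Rightarrow> int) \<Rightarrow> bool" where
  "same_arith_matroid X Y \<longleftrightarrow> (\<forall>S. mrk X S = mrk Y S \<and> mult X S = mult Y S)"

text \<open>Bipartite graph G_A: vertices Inl i = r_i and Inr j = c_j; edges are identified
  with the positions (i,j) of nonzero entries of A.\<close>
definition graph_edges :: "('d \<Rightarrow> 'a \<Rightarrow> int) \<Rightarrow> ('d \<times> 'a) set" where
  "graph_edges A = {(i, j). A i j \<noteq> 0}"

definition adj :: "('d \<times> 'a) set \<Rightarrow> 'd + 'a \<Rightarrow> 'd + 'a \<Rightarrow> bool" where
  "adj F u v \<longleftrightarrow> (\<exists>i j. (i, j) \<in> F \<and> ((u = Inl i \<and> v = Inr j) \<or> (u = Inr j \<and> v = Inl i)))"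

definition connected_in :: "('d \<times> 'a) set \<Rightarrow> 'd + 'a \<Rightarrow> 'd + 'a \<Rightarrow> bool" where
  "connected_in F u v \<longleftrightarrow> (u, v) \<in> {(x, y). adj F x y}\<^sup>*"

definition has_cycle :: "('d \<times> 'a) set \<Rightarrow> bool" where
  "has_cycle F \<longleftrightarrow> (\<exists>vs. length vs \<ge> 3 \<and> distinct vs \<and>
      (\<forall>k < length vs - 1. adj F (vs ! k) (vs ! Suc k)) \<and> adj F (last vs) (hd vs))"

text \<open>Coordinatizing path: the edges of a spanning forest of G_A.\<close>
definition coordinatizing_path :: "('d \<Rightarrow> 'a \<Rightarrow> int) \<Rightarrow> ('d \<times> 'a) set \<Rightarrow> bool" where
  "coordinatizing_path A P \<longleftrightarrow> P \<subseteq> graph_edges A \<and> \<not> has_cycle P \<and>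
      (\<forall>u v. connected_in P u v \<longleftrightarrow> connected_in (graph_edges A) u v)"

end

theory Submission
  imports Defs
begin
definition lat :: "int^'n^'n \<Rightarrow> (int^'n) set" where
  "lat M = range (\<lambda>c. M *v c)"

definition idx :: "int^'n^'n \<Rightarrow> nat" where
  "idx M = card ((\<lambda>v. (+) v ` lat M) ` UNIV)"

lemma lat_add: "x \<in> lat M \<Longrightarrow> y \<in> lat M \<Longrightarrow> x + y \<in> lat M"
  unfolding lat_def by (auto simp: image_iff matrix_vector_right_distrib[symmetric])

lemma lat_minus: "x \<in> lat M \<Longrightarrow> y \<in> lat M \<Longrightarrow> x - y \<in> lat M"
  unfolding lat_def by (auto simp: image_iff matrix_vector_mult_diff_distrib[symmetric])

lemma lat_zero: "0 \<in> lat M"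
  unfolding lat_def by (auto simp: image_iff intro: exI[of _ 0])

lemma coset_eq:
  assumes "a - b \<in> lat M" shows "(+) a ` lat M = (+) b ` lat M"
proof
  show "(+) a ` lat M \<subseteq> (+) b ` lat M"
  proof
    fix x assume "x \<in> (+) a ` lat M"
    then obtain y where y: "y \<in> lat M" "x = a + y" by auto
    have "(a - b) + y \<in> lat M" using lat_add[OF assms y(1)] .
    moreover have "x = b + ((a - b) + y)" using y by simp
    ultimately show "x \<in> (+) b ` lat M" by blast
  qed
next
  show "(+) b ` lat M \<subseteq> (+) a ` lat M"
  proof
    fix x assume "x \<in> (+) b ` lat M"
    then obtain y where y: "y \<in> lat M" "x = b + y" by auto
    have "y - (a - b) \<in> lat M" using lat_minus[OF y(1) assms] .
    moreover have "x = a + (y - (a - b))" using y by simp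
    ultimately show "x \<in> (+) a ` lat M" by blast
  qed
qed

lemma lat_right:
  assumes "E ** F = mat 1" shows "lat (M ** E) = lat M"
proof -
  have 1: "(M ** E) *v c = M *v (E *v c)" for c by (simp add: matrix_vector_mul_assoc)
  have 2: "M *v c = (M ** E) *v (F *v c)" for c
    by (metis assms matrix_vector_mul_assoc matrix_vector_mul_lid)
  show ?thesis unfolding lat_def using 1 2 by (metis (no_types, lifting) image_cong rangeI subsetI subset_antisym image_subset_iff)
qed

lemma idx_left:
  assumes "E ** F = mat 1" "F ** E = mat 1" shows "idx (E ** M) = idx M"
proof -
  let ?T = "\<lambda>v. E *v v"
  have injT: "inj ?T"
    by (rule inj_on_inverseI[of _ "\<lambda>v. F *v v"]) (metis assms(2) matrix_vector_mul_assoc matrix_vector_mul_lid)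
  have surjT: "range ?T = UNIV"
    by (metis (no_types, lifting) assms(1) matrix_vector_mul_assoc matrix_vector_mul_lid surjI)
  have lat: "lat (E ** M) = ?T ` lat M" unfolding lat_def
    by (simp add: image_image matrix_vector_mul_assoc)
  have cos: "(\<lambda>v. (+) v ` lat (E ** M)) ` UNIV = image ?T ` ((\<lambda>v. (+) v ` lat M) ` UNIV)"
  proof -
    have e: "(+) (?T v) ` (?T ` lat M) = ?T ` ((+) v ` lat M)" for v
      by (simp add: image_image matrix_vector_right_distrib)
    show ?thesis
    proof (rule set_eqI, rule iffI)
      fix X assume "X \<in> (\<lambda>v. (+) v ` lat (E ** M)) ` UNIV"
      then obtain w where X: "X = (+) w ` lat (E ** M)" by auto
      obtain v where v: "w = ?T v" using surjT by (metis UNIV_I imageE)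
      have "X = ?T ` ((+) v ` lat M)" unfolding X v lat e ..
      then show "X \<in> image ?T ` ((\<lambda>v. (+) v ` lat M) ` UNIV)" by blast
    next
      fix X assume "X \<in> image ?T ` ((\<lambda>v. (+) v ` lat M) ` UNIV)"
      then obtain v where X: "X = ?T ` ((+) v ` lat M)" by auto
      then have "X = (+) (?T v) ` lat (E ** M)" unfolding X lat e ..
      then show "X \<in> (\<lambda>v. (+) v ` lat (E ** M)) ` UNIV" by blast
    qed
  qed
  have "inj_on (image ?T) X" for X
    using injT by (simp add: inj_on_def inj_image_eq_iff)
  then show ?thesis unfolding idx_def cos by (simp add: card_image)
qed

lemma lat_perm:
  assumes p: "p permutes (UNIV::'n::finite set)"
  shows "lat ((\<chi> r j. M$r$(p j)) :: int^'n^'n) = lat M"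
proof -
  have 1: "(\<chi> r j. M$r$(p j)) *v c = M *v (\<chi> j. c$(inv p j))" for c
  proof -
    have "(\<Sum>j\<in>UNIV. M$r$j * c$(inv p j)) = (\<Sum>j\<in>UNIV. M$r$(p j) * c$j)" for r
      using sum.permute[OF p, of "\<lambda>j. M$r$j * c$(inv p j)"]
      by (simp add: o_def permutes_inverses(2)[OF p])
    then show ?thesis by (simp add: matrix_vector_mult_def)
  qed
  have 2: "M *v c = (\<chi> r j. M$r$(p j)) *v (\<chi> j. c$(p j))" for c
  proof -
    have "(\<Sum>j\<in>UNIV. M$r$j * c$j) = (\<Sum>j\<in>UNIV. M$r$(p j) * c$(p j))" for r
      using sum.permute[OF p, of "\<lambda>j. M$r$j * c$j"] by (simp add: o_def)
    then show ?thesis by (simp add: matrix_vector_mult_def)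
  qed
  show ?thesis unfolding lat_def using 1 2 by (metis (no_types, lifting) rangeI subsetI subset_antisym image_subset_iff)
qed

lemma det_only_id:
  fixes M :: "'a::comm_ring_1^'n::finite^'n"
  assumes "\<And>p. p permutes UNIV \<Longrightarrow> p \<noteq> id \<Longrightarrow> (\<Prod>i\<in>UNIV. M$i$p i) = 0"
  shows "det M = (\<Prod>i\<in>UNIV. M$i$i)"
proof -
  have "det M = (\<Sum>p\<in>{id}. of_int (sign p) * (\<Prod>i\<in>UNIV. M$i$p i))"
    unfolding det_def
    by (rule sum.mono_neutral_right) (auto simp: finite_permutations assms)
  then show ?thesis by simp
qed

lemma det_two:
  fixes M :: "'a::comm_ring_1^'n::finite^'n"
  assumes "p1 permutes UNIV" "p2 permutes UNIV" "p1 \<noteq> p2"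
    and "\<And>p. p permutes UNIV \<Longrightarrow> p \<noteq> p1 \<Longrightarrow> p \<noteq> p2 \<Longrightarrow> (\<Prod>i\<in>UNIV. M$i$p i) = 0"
  shows "det M = of_int (sign p1) * (\<Prod>i\<in>UNIV. M$i$p1 i) + of_int (sign p2) * (\<Prod>i\<in>UNIV. M$i$p2 i)"
proof -
  have "det M = (\<Sum>p\<in>{p1,p2}. of_int (sign p) * (\<Prod>i\<in>UNIV. M$i$p i))"
    unfolding det_def
    by (rule sum.mono_neutral_right) (auto simp: finite_permutations assms)
  then show ?thesis using assms(3) by simp
qed

lemma perm_moves_nonl:
  assumes p: "p permutes (UNIV::'n set)" and "p \<noteq> id"
  shows "\<exists>r. r \<noteq> l \<and> p r \<noteq> r"
proof -
  obtain r where r: "p r \<noteq> r" using assms(2) by (auto simp: fun_eq_iff)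
  show ?thesis
  proof (cases "r = l")
    case True
    let ?s = "inv p l"
    have "p ?s = l" by (simp add: permutes_inverses(1)[OF p])
    moreover have "?s \<noteq> l" using r True \<open>p ?s = l\<close> by auto
    ultimately show ?thesis by (intro exI[of _ ?s]) auto
  next
    case False then show ?thesis using r by auto
  qed
qed

definition colop :: "'n \<Rightarrow> ('n \<Rightarrow> int) \<Rightarrow> int^'n^'n" where
  "colop l q = (\<chi> i j. (if i = j then 1 else 0) + (if i = l \<and> j \<noteq> l then q j else 0))"

definition rowop :: "'n \<Rightarrow> ('n \<Rightarrow> int) \<Rightarrow> int^'n^'n" where
  "rowop l q = (\<chi> i j. (if i = j then 1 else 0) + (if j = l \<and> i \<noteq> l then q i else 0))"

lemma colop_mult: "(M ** colop l q)$r$j = M$r$j + (if j \<noteq> l then M$r$l * q j else 0)"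
proof -
  have e: "M$r$k * colop l q$k$j = (if k = j then M$r$k else 0) + (if k = l then (if j \<noteq> l then M$r$k * q j else 0) else 0)" for k
    by (simp add: colop_def distrib_left)
  have "(M ** colop l q)$r$j = (\<Sum>k\<in>UNIV. (if k = j then M$r$k else 0) + (if k = l then (if j \<noteq> l then M$r$k * q j else 0) else 0))"
    unfolding matrix_matrix_mult_def using e by simp
  also have "\<dots> = M$r$j + (if j \<noteq> l then M$r$l * q j else 0)"
    by (simp only: sum.distrib) (simp add: sum.delta)
  finally show ?thesis .
qed
lemma rowop_mult: "(rowop l q ** M)$r$j = M$r$j + (if r \<noteq> l then q r * M$l$j else 0)"
proof -
  have e: "rowop l q$r$k * M$k$j = (if k = r then M$k$j else 0) + (if k = l then (if r \<noteq> l then q r * M$k$j else 0) else 0)" for k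
    by (auto simp: rowop_def distrib_right)
  have "(rowop l q ** M)$r$j = (\<Sum>k\<in>UNIV. (if k = r then M$k$j else 0) + (if k = l then (if r \<noteq> l then q r * M$k$j else 0) else 0))"
    unfolding matrix_matrix_mult_def using e by simp
  also have "\<dots> = M$r$j + (if r \<noteq> l then q r * M$l$j else 0)"
    by (simp only: sum.distrib) (simp add: sum.delta)
  finally show ?thesis .
qed

lemma colop_inv: "colop l q ** colop l (\<lambda>j. - q j) = mat 1"
  unfolding vec_eq_iff
proof (intro allI)
  fix r j
  show "(colop l q ** colop l (\<lambda>j. - q j)) $ r $ j = mat 1 $ r $ j"
    unfolding colop_mult by (cases "r = l"; cases "j = l"; cases "r = j") (simp_all add: colop_def mat_def)
qed

lemma rowop_inv: "rowop l q ** rowop l (\<lambda>j. - q j) = mat 1"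
  unfolding vec_eq_iff
proof (intro allI)
  fix r j
  show "(rowop l q ** rowop l (\<lambda>j. - q j)) $ r $ j = mat 1 $ r $ j"
    unfolding rowop_mult by (cases "r = l"; cases "j = l"; cases "r = j") (simp_all add: rowop_def mat_def)
qed

lemma colop_inv2: "colop l (\<lambda>j. - q j) ** colop l q = mat 1"
  using colop_inv[of l "\<lambda>j. - q j"] by simp

lemma rowop_inv2: "rowop l (\<lambda>j. - q j) ** rowop l q = mat 1"
  using rowop_inv[of l "\<lambda>j. - q j"] by simp

lemma det_colop: "det (colop l q) = 1"
proof -
  have "det (colop l q) = (\<Prod>i\<in>UNIV. colop l q$i$i)"
  proof (rule det_only_id)
    fix p :: "'a \<Rightarrow> 'a" assume p: "p permutes UNIV" "p \<noteq> id"
    from perm_moves_nonl[OF p, of l] obtain r where r: "r \<noteq> l" "p r \<noteq> r" by blast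
    then have "colop l q$r$p r = 0" by (simp add: colop_def)
    then show "(\<Prod>i\<in>UNIV. colop l q$i$p i) = 0" by (intro prod_zero) auto
  qed
  moreover have "colop l q$i$i = 1" for i by (simp add: colop_def)
  ultimately show ?thesis by simp
qed

lemma rowop_transpose: "rowop l q = transpose (colop l q)"
  by (simp add: vec_eq_iff rowop_def colop_def transpose_def)

lemma det_rowop: "det (rowop l q) = 1"
  by (simp add: rowop_transpose det_colop)

definition dg :: "'n set \<Rightarrow> int^'n^'n \<Rightarrow> bool" where
  "dg K M \<longleftrightarrow> (\<forall>i j. M$i$j \<noteq> 0 \<longrightarrow> i = j \<or> (i \<in> K \<and> j \<in> K))"

lemma small_dvd_eq:
  fixes a b m :: int
  assumes "0 \<le> a" "a < \<bar>m\<bar>" "0 \<le> b" "b < \<bar>m\<bar>" "m dvd a - b" shows "a = b"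
proof -
  obtain t where t: "a - b = m * t" using assms(5) by (auto elim: dvdE)
  have lt: "\<bar>a - b\<bar> < \<bar>m\<bar>" using assms by linarith
  have "t = 0"
  proof (rule ccontr)
    assume "t \<noteq> 0"
    then have "1 \<le> \<bar>t\<bar>" by linarith
    then have "\<bar>m\<bar> \<le> \<bar>m\<bar> * \<bar>t\<bar>" by (simp add: mult_le_cancel_left1)
    moreover have "\<bar>a - b\<bar> = \<bar>m\<bar> * \<bar>t\<bar>" using t by (simp add: abs_mult)
    ultimately show False using lt by linarith
  qed
  then show ?thesis using t by simp
qed

lemma diag_mv:
  fixes M :: "int^'n^'n"
  assumes "\<forall>i j. i \<noteq> j \<longrightarrow> M$i$j = 0"
  shows "(M *v c)$i = M$i$i * c$i"
proof -
  have "(M *v c)$i = (\<Sum>j\<in>UNIV. M$i$j * c$j)" by (simp add: matrix_vector_mult_def)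
  also have "\<dots> = (\<Sum>j\<in>UNIV. if j = i then M$i$j * c$j else 0)"
    by (rule sum.cong) (auto simp: assms)
  also have "\<dots> = M$i$i * c$i" by (simp add: sum.delta)
  finally show ?thesis .
qed

lemma lat_diag:
  fixes M :: "int^'n^'n"
  assumes "\<forall>i j. i \<noteq> j \<longrightarrow> M$i$j = 0"
  shows "lat M = {v. \<forall>i. M$i$i dvd v$i}"
proof
  show "lat M \<subseteq> {v. \<forall>i. M$i$i dvd v$i}"
    unfolding lat_def using diag_mv[OF assms] by auto
  show "{v. \<forall>i. M$i$i dvd v$i} \<subseteq> lat M"
  proof
    fix v assume v: "v \<in> {v. \<forall>i. M$i$i dvd v$i}"
    define c where "c = (\<chi> i. v$i div M$i$i)"
    have "(M *v c)$i = v$i" for i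
    proof -
      have "M$i$i dvd v$i" using v by blast
      then show ?thesis unfolding diag_mv[OF assms] c_def vec_lambda_beta by (rule dvd_mult_div_cancel)
    qed
    then have "M *v c = v" by (simp add: vec_eq_iff)
    then show "v \<in> lat M" unfolding lat_def by (metis rangeI)
  qed
qed

lemma idx_diag:
  fixes M :: "int^'n^'n"
  assumes "\<forall>i j. i \<noteq> j \<longrightarrow> M$i$j = 0" "\<forall>i. M$i$i \<noteq> 0"
  shows "int (idx M) = (\<Prod>i\<in>UNIV. \<bar>M$i$i\<bar>)"
proof -
  let ?R = "{r::int^'n. \<forall>i. 0 \<le> r$i \<and> r$i < \<bar>M$i$i\<bar>}"
  let ?f = "\<lambda>r. (+) r ` lat M"
  have bij: "bij_betw ?f ?R ((\<lambda>v. (+) v ` lat M) ` UNIV)"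
  proof (rule bij_betw_imageI)
    show "inj_on ?f ?R"
    proof (rule inj_onI)
      fix r r' assume r: "r \<in> ?R" and r': "r' \<in> ?R" and e: "?f r = ?f r'"
      have "r \<in> ?f r" using lat_zero[of M] by force
      then have "r \<in> ?f r'" using e by simp
      then obtain y where y: "y \<in> lat M" "r = r' + y" by auto
      have d: "M$i$i dvd r$i - r'$i" for i using y lat_diag[OF assms(1)] by auto
      show "r = r'"
      proof (rule vec_eq_iff[THEN iffD2], rule allI)
        fix i
        have "0 \<le> r$i" "r$i < \<bar>M$i$i\<bar>" "0 \<le> r'$i" "r'$i < \<bar>M$i$i\<bar>" using r r' by auto
        then show "r$i = r'$i" using d[of i] by (rule small_dvd_eq)
      qed
    qed
    show "?f ` ?R = (\<lambda>v. (+) v ` lat M) ` UNIV"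
    proof
      show "?f ` ?R \<subseteq> (\<lambda>v. (+) v ` lat M) ` UNIV" by auto
      show "(\<lambda>v. (+) v ` lat M) ` UNIV \<subseteq> ?f ` ?R"
      proof
        fix X assume "X \<in> (\<lambda>v. (+) v ` lat M) ` UNIV"
        then obtain v where X: "X = (+) v ` lat M" by auto
        define r where "r = (\<chi> i. v$i mod \<bar>M$i$i\<bar>)"
        have "0 \<le> r$i \<and> r$i < \<bar>M$i$i\<bar>" for i
        proof -
          have "\<bar>M$i$i\<bar> > 0" using assms(2) by simp
          then show ?thesis unfolding r_def vec_lambda_beta by simp
        qed
        then have rR: "r \<in> ?R" by blast
        have "M$i$i dvd (v - r)$i" for i
        proof -
          have "\<bar>M$i$i\<bar> dvd v$i - v$i mod \<bar>M$i$i\<bar>" by (rule dvd_minus_mod)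
          then have "M$i$i dvd v$i - v$i mod \<bar>M$i$i\<bar>" by (simp only: abs_dvd_iff)
          then show ?thesis unfolding r_def by simp
        qed
        then have "v - r \<in> lat M" unfolding lat_diag[OF assms(1)] by blast
        then have "X = ?f r" using X coset_eq by blast
        with rR show "X \<in> ?f ` ?R" by blast
      qed
    qed
  qed
  then have c1: "idx M = card ?R" unfolding idx_def by (simp add: bij_betw_same_card)
  have R: "?R = vec_lambda ` (PiE UNIV (\<lambda>i. {0..<\<bar>M$i$i\<bar>}))"
  proof
    show "?R \<subseteq> vec_lambda ` (PiE UNIV (\<lambda>i. {0..<\<bar>M$i$i\<bar>}))"
    proof
      fix r assume "r \<in> ?R"
      then have "(\<lambda>i. r$i) \<in> PiE UNIV (\<lambda>i. {0..<\<bar>M$i$i\<bar>})" by (simp add: PiE_iff)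
      moreover have "r = vec_lambda (\<lambda>i. r$i)" by simp
      ultimately show "r \<in> vec_lambda ` (PiE UNIV (\<lambda>i. {0..<\<bar>M$i$i\<bar>}))" by blast
    qed
    show "vec_lambda ` (PiE UNIV (\<lambda>i. {0..<\<bar>M$i$i\<bar>})) \<subseteq> ?R"
      by (auto simp: PiE_iff)
  qed
  have "card ?R = card (PiE UNIV (\<lambda>i. {0..<\<bar>M$i$i\<bar>}))"
    unfolding R by (rule card_image) (simp add: inj_on_def vec_lambda_inject)
  also have "\<dots> = (\<Prod>i\<in>UNIV. nat \<bar>M$i$i\<bar>)" by (simp add: card_PiE)
  finally show ?thesis using c1 by (simp add: of_nat_prod)
qed

lemma mod_step: "(x::int) + a * (- (x div a)) = x mod a"
  by (simp add: minus_mult_div_eq_mod[symmetric])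

lemma mod_step2: "(x::int) + (- (x div a)) * a = x mod a"
  by (simp add: minus_div_mult_eq_mod[symmetric])

lemma abs_sign_mult: "\<bar>(of_int (sign p) :: int) * x\<bar> = \<bar>x\<bar>"
  by (simp add: sign_def abs_mult)

lemma reduce:
  fixes M :: "int^'n^'n"
  assumes "dg K M" "det M \<noteq> 0" "i \<in> K" "l \<in> K" "M$i$l \<noteq> 0"
  shows "\<exists>M' k. k \<in> K \<and> dg (K - {k}) M' \<and> \<bar>det M'\<bar> = \<bar>det M\<bar> \<and> idx M' = idx M"
  using assms
proof (induction "nat \<bar>M$i$l\<bar>" arbitrary: M i l rule: less_induct)
  case less
  let ?a = "M$i$l"
  have dgM: "\<And>r j. M$r$j \<noteq> 0 \<Longrightarrow> r = j \<or> (r \<in> K \<and> j \<in> K)" using less.prems(1) unfolding dg_def by blast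
  show ?case
  proof (cases "\<exists>l'\<in>K. \<not> ?a dvd M$i$l'")
    case True
    then obtain l' where l': "l' \<in> K" "\<not> ?a dvd M$i$l'" by blast
    define q where "q = (\<lambda>j. if j = l' then - (M$i$l' div ?a) else 0)"
    define M1 where "M1 = M ** colop l q"
    have ll: "l' \<noteq> l" using l' by auto
    have e1: "M1$r$j = M$r$j + (if j \<noteq> l then M$r$l * q j else 0)" for r j
      unfolding M1_def colop_mult ..
    have v: "M1$i$l' = M$i$l' mod ?a" unfolding e1 q_def using ll by (simp add: minus_mult_div_eq_mod)
    have nz: "M1$i$l' \<noteq> 0" using v l'(2) by (simp add: dvd_eq_mod_eq_0)
    have lt: "nat \<bar>M1$i$l'\<bar> < nat \<bar>?a\<bar>" using v abs_mod_less[OF less.prems(5)] less.prems(5) by simp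
    have dg1: "dg K M1" unfolding dg_def
    proof (intro allI impI)
      fix r j assume nz: "M1$r$j \<noteq> 0"
      show "r = j \<or> (r \<in> K \<and> j \<in> K)"
      proof (cases "M$r$j = 0")
        case True
        then have "j \<noteq> l" "M$r$l * q j \<noteq> 0" using nz e1[of r j] by (auto split: if_splits)
        then have "j = l'" "M$r$l \<noteq> 0" by (auto simp: q_def split: if_splits)
        then show ?thesis using dgM[of r l] less.prems(4) l'(1) by blast
      next
        case False then show ?thesis using dgM by blast
      qed
    qed
    have det1: "det M1 = det M" unfolding M1_def det_mul det_colop by simp
    have idx1: "idx M1 = idx M" unfolding idx_def M1_def lat_right[OF colop_inv] ..
    have "\<exists>M' k. k \<in> K \<and> dg (K - {k}) M' \<and> \<bar>det M'\<bar> = \<bar>det M1\<bar> \<and> idx M' = idx M1"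
      by (rule less.hyps[OF _ dg1 _ less.prems(3) l'(1) nz]) (use lt det1 less.prems(2) in auto)
    then show ?thesis using det1 idx1 by simp
  next
    case False
    note allc = False
    show ?thesis
    proof (cases "\<exists>i'\<in>K. \<not> ?a dvd M$i'$l")
      case True
      then obtain i' where i': "i' \<in> K" "\<not> ?a dvd M$i'$l" by blast
      define q where "q = (\<lambda>r. if r = i' then - (M$i'$l div ?a) else 0)"
      define M1 where "M1 = rowop i q ** M"
      have ii: "i' \<noteq> i" using i' by auto
      have e1: "M1$r$j = M$r$j + (if r \<noteq> i then q r * M$i$j else 0)" for r j
        unfolding M1_def rowop_mult ..
      have v: "M1$i'$l = M$i'$l mod ?a" unfolding e1 q_def using ii by (simp add: minus_div_mult_eq_mod)
      have nz: "M1$i'$l \<noteq> 0" using v i'(2) by (simp add: dvd_eq_mod_eq_0)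
      have lt: "nat \<bar>M1$i'$l\<bar> < nat \<bar>?a\<bar>" using v abs_mod_less[OF less.prems(5)] less.prems(5) by simp
      have dg1: "dg K M1" unfolding dg_def
      proof (intro allI impI)
        fix r j assume nz: "M1$r$j \<noteq> 0"
        show "r = j \<or> (r \<in> K \<and> j \<in> K)"
        proof (cases "M$r$j = 0")
          case True
          then have "r \<noteq> i" "q r * M$i$j \<noteq> 0" using nz e1[of r j] by (auto split: if_splits)
          then have "r = i'" "M$i$j \<noteq> 0" by (auto simp: q_def split: if_splits)
          then show ?thesis using dgM[of i j] less.prems(3) i'(1) by blast
        next
          case False then show ?thesis using dgM by blast
        qed
      qed
      have det1: "det M1 = det M" unfolding M1_def det_mul det_rowop by simp
      have idx1: "idx M1 = idx M" unfolding M1_def by (rule idx_left[OF rowop_inv rowop_inv2])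
      have "\<exists>M' k. k \<in> K \<and> dg (K - {k}) M' \<and> \<bar>det M'\<bar> = \<bar>det M1\<bar> \<and> idx M' = idx M1"
        by (rule less.hyps[OF _ dg1 _ i'(1) less.prems(4) nz]) (use lt det1 less.prems(2) in auto)
      then show ?thesis using det1 idx1 by simp
    next
      case False
      note allr = False
      have dvc: "j \<in> K \<Longrightarrow> ?a dvd M$i$j" for j using allc by blast
      have dvr: "r \<in> K \<Longrightarrow> ?a dvd M$r$l" for r using allr by blast
      define q1 where "q1 = (\<lambda>j. if j \<in> K \<and> j \<noteq> l then - (M$i$j div ?a) else 0)"
      define M1 where "M1 = M ** colop l q1"
      define q2 where "q2 = (\<lambda>r. if r \<in> K \<and> r \<noteq> i then - (M$r$l div ?a) else 0)"
      define M2 where "M2 = rowop i q2 ** M1"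
      have e1: "M1$r$j = M$r$j + (if j \<noteq> l then M$r$l * q1 j else 0)" for r j
        unfolding M1_def colop_mult ..
      have e2: "M2$r$j = M1$r$j + (if r \<noteq> i then q2 r * M1$i$j else 0)" for r j
        unfolding M2_def rowop_mult ..
      have row1: "M1$i$j = (if j = l then ?a else 0)" for j
      proof (cases "j = l")
        case True then show ?thesis by (simp add: e1)
      next
        case False
        show ?thesis
        proof (cases "j \<in> K")
          case True
          have "M$i$j + ?a * (- (M$i$j div ?a)) = 0"
            using dvc[OF True] by (simp add: mod_step dvd_eq_mod_eq_0)
          then show ?thesis using False True by (simp add: e1 q1_def)
        next
          case nK: False
          have "M$i$j = 0" using dgM[of i j] nK less.prems(3) by auto
          then show ?thesis using False nK by (simp add: e1 q1_def)
        qed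
      qed
      have colM2: "M2$r$l = (if r = i then ?a else 0)" for r
      proof (cases "r = i")
        case True then show ?thesis by (simp add: e2 row1)
      next
        case False
        show ?thesis
        proof (cases "r \<in> K")
          case True
          have "M$r$l + (- (M$r$l div ?a)) * ?a = 0"
            using dvr[OF True] by (simp add: mod_step2 dvd_eq_mod_eq_0)
          then show ?thesis using False True by (simp add: e2 e1 row1 q2_def)
        next
          case nK: False
          have "M$r$l = 0" using dgM[of r l] nK less.prems(4) by auto
          then show ?thesis using False nK by (simp add: e2 e1 row1 q2_def)
        qed
      qed
      have rowM2: "M2$i$j = (if j = l then ?a else 0)" for j by (simp add: e2 row1)
      have oth: "j \<noteq> l \<Longrightarrow> M2$r$j = M1$r$j" for r j by (simp add: e2 row1)
      have dgM1: "M1$r$j \<noteq> 0 \<Longrightarrow> r = j \<or> (r \<in> K \<and> j \<in> K)" for r j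
      proof (cases "M$r$j = 0")
        case True
        assume nz: "M1$r$j \<noteq> 0"
        then have "j \<noteq> l" "M$r$l * q1 j \<noteq> 0" using True e1[of r j] by (auto split: if_splits)
        then have "j \<in> K" "M$r$l \<noteq> 0" by (auto simp: q1_def split: if_splits)
        then show ?thesis using dgM[of r l] less.prems(4) by blast
      next
        case False then show ?thesis using dgM by blast
      qed
      have dgM2: "M2$r$j \<noteq> 0 \<Longrightarrow> r = j \<or> (r \<in> K \<and> j \<in> K)" for r j
      proof (cases "j = l")
        case True
        assume "M2$r$j \<noteq> 0"
        then have "r = i" using True colM2 by (auto split: if_splits)
        then show ?thesis using True less.prems(3,4) by blast
      next
        case False
        assume "M2$r$j \<noteq> 0"
        then show ?thesis using False oth dgM1 by metis
      qed
      have det2: "det M2 = det M" by (simp add: M2_def M1_def det_mul det_colop det_rowop)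
      have idx2: "idx M2 = idx M" unfolding M2_def idx_left[OF rowop_inv rowop_inv2]
        unfolding idx_def M1_def lat_right[OF colop_inv] ..
      define \<tau> where "\<tau> = Transposition.transpose l i"
      have \<tau>p: "\<tau> permutes UNIV" unfolding \<tau>_def by (rule permutes_swap_id) auto
      have \<tau>e: "\<tau> j = (if j = l then i else if j = i then l else j)" for j
        by (simp add: \<tau>_def Transposition.transpose_def)
      define M3 where "M3 = (\<chi> r j. M2$r$(\<tau> j))"
      have e3: "M3$r$j = M2$r$(\<tau> j)" for r j by (simp add: M3_def)
      have det3: "\<bar>det M3\<bar> = \<bar>det M2\<bar>" unfolding M3_def det_permute_columns[OF \<tau>p]
        by (rule abs_sign_mult)
      have idx3: "idx M3 = idx M2" unfolding idx_def M3_def lat_perm[OF \<tau>p] ..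
      have dg3: "dg (K - {i}) M3" unfolding dg_def
      proof (intro allI impI)
        fix r j assume "M3$r$j \<noteq> 0"
        then have nz2: "M2$r$(\<tau> j) \<noteq> 0" by (simp add: e3)
        show "r = j \<or> (r \<in> K - {i} \<and> j \<in> K - {i})"
        proof (cases "r = i")
          case True
          then have "\<tau> j = l" using nz2 rowM2 by (auto split: if_splits)
          then have "j = i" using \<tau>e[of j] by (auto split: if_splits)
          then show ?thesis using True by simp
        next
          case ri: False
          show ?thesis
          proof (cases "j = i")
            case True
            then have "\<tau> j = l" using \<tau>e by simp
            then have "r = i" using nz2 colM2 by (auto split: if_splits)
            then show ?thesis using ri by simp
          next
            case ji: False
            from dgM2[OF nz2] show ?thesis
            proof
              assume "r = \<tau> j"
              then show ?thesis using ri ji \<tau>e[of j] by (auto split: if_splits)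
            next
              assume "r \<in> K \<and> \<tau> j \<in> K"
              then show ?thesis using ri ji \<tau>e[of j] less.prems(3,4) by (auto split: if_splits)
            qed
          qed
        qed
      qed
      show ?thesis
        using less.prems(3) dg3 det3 det2 idx3 idx2 by (intro exI[of _ M3] exI[of _ i]) simp
    qed
  qed
qed

lemma idx_det_aux:
  fixes M :: "int^'n^'n"
  shows "dg K M \<Longrightarrow> det M \<noteq> 0 \<Longrightarrow> int (idx M) = \<bar>det M\<bar>"
proof (induction "card K" arbitrary: K M rule: less_induct)
  case less
  show ?case
  proof (cases "K = {}")
    case True
    then have off: "\<forall>i j. i \<noteq> j \<longrightarrow> M$i$j = 0" using less.prems(1) by (auto simp: dg_def)
    have dm: "det M = (\<Prod>i\<in>UNIV. M$i$i)"
    proof (rule det_only_id)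
      fix p :: "'n \<Rightarrow> 'n" assume "p permutes UNIV" "p \<noteq> id"
      then obtain r where "p r \<noteq> r" by (auto simp: fun_eq_iff)
      then have "M$r$p r = 0" using off by auto
      then show "(\<Prod>i\<in>UNIV. M$i$p i) = 0" by (intro prod_zero) auto
    qed
    have "\<forall>i. M$i$i \<noteq> 0" using dm less.prems(2) by auto
    then have "int (idx M) = (\<Prod>i\<in>UNIV. \<bar>M$i$i\<bar>)" using idx_diag off by blast
    also have "\<dots> = \<bar>det M\<bar>" by (simp add: dm abs_prod)
    finally show ?thesis .
  next
    case False
    then obtain i where i: "i \<in> K" by blast
    have "row i M \<noteq> 0" using less.prems(2) det_zero_row(1) by blast
    then obtain l where l: "M$i$l \<noteq> 0" by (auto simp: row_def vec_eq_iff)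
    have lK: "l \<in> K" using less.prems(1) i l unfolding dg_def by blast
    obtain M' k where k: "k \<in> K" "dg (K - {k}) M'" "\<bar>det M'\<bar> = \<bar>det M\<bar>" "idx M' = idx M"
      using reduce[OF less.prems(1,2) i lK l] by blast
    have "card (K - {k}) < card K" using k(1) by (intro card_Diff1_less) auto
    moreover have "det M' \<noteq> 0" using k(3) less.prems(2) by auto
    ultimately have "int (idx M') = \<bar>det M'\<bar>" using less.hyps k(2) by blast
    then show ?thesis using k by simp
  qed
qed

theorem idx_det: "det (M::int^'n^'n) \<noteq> 0 \<Longrightarrow> int (idx M) = \<bar>det M\<bar>"
  using idx_det_aux[of UNIV M] by (simp add: dg_def)

definition selm :: "('d::finite \<Rightarrow> 'e \<Rightarrow> int) \<Rightarrow> ('d \<Rightarrow> 'e) \<Rightarrow> int^'d^'d" where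
  "selm X g = (\<chi> i l. X i (g l))"

definition ivec :: "int^'d::finite \<Rightarrow> real^'d" where
  "ivec v = (\<chi> i. real_of_int (v$i))"

lemma det_of_int: "det (\<chi> i j. (of_int (M$i$j) :: real)) = of_int (det (M::int^'n^'n))"
  unfolding det_def by simp

lemma columns_selm: "columns ((\<chi> i l. real_of_int (X i (g l))) :: real^'d::finite^'d) = colR X ` range g"
  unfolding columns_def column_def colR_def by auto

lemma rank_det:
  fixes X :: "'d::finite \<Rightarrow> 'e \<Rightarrow> int"
  shows "mrk X (range g) = CARD('d) \<longleftrightarrow> det (selm X g) \<noteq> 0"
proof -
  let ?Yr = "(\<chi> i l. real_of_int (X i (g l))) :: real^'d^'d"
  have "rank ?Yr = mrk X (range g)" unfolding column_rank_def mrk_def columns_selm by (simp add: dim_span)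
  moreover have "det ?Yr = of_int (det (selm X g))" using det_of_int[of "selm X g"] by (simp add: selm_def)
  moreover have "rank ?Yr \<le> CARD('d)" using rank_bound[of ?Yr] by simp
  ultimately show ?thesis using det_eq_0_rank[of ?Yr] by auto
qed

lemma ivec_mv: "ivec (selm X g *v c) = (\<Sum>l\<in>UNIV. of_int (c$l) *\<^sub>R colR X (g l))"
  by (simp add: vec_eq_iff ivec_def selm_def matrix_vector_mult_def colR_def sum_component mult.commute)

lemma ivec_add: "ivec (a + b) = ivec a + ivec b"
  by (simp add: vec_eq_iff ivec_def)

lemma ivec_inj: "inj ivec"
  by (rule injI) (simp add: vec_eq_iff ivec_def)

lemma int_gen_range:
  fixes X :: "'d::finite \<Rightarrow> 'e \<Rightarrow> int"
  assumes "inj g"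
  shows "int_gen X (range g) = ivec ` lat (selm X g)"
proof
  show "int_gen X (range g) \<subseteq> ivec ` lat (selm X g)"
  proof
    fix v assume "v \<in> int_gen X (range g)"
    then obtain T c where T: "finite T" "T \<subseteq> range g" and v: "v = (\<Sum>e\<in>T. of_int (c e) *\<^sub>R colR X e)"
      unfolding int_gen_def by blast
    define c' where "c' = (\<chi> l. if g l \<in> T then c (g l) else 0)"
    let ?f = "\<lambda>e. of_int (c e) *\<^sub>R colR X e"
    have gT: "g ` (g -` T) = T" using T(2) by auto
    have inj: "inj_on g (g -` T)" using inj_on_subset[OF assms] by blast
    have "v = sum ?f (g ` (g -` T))" using gT v by simp
    also have "\<dots> = sum (?f \<circ> g) (g -` T)" by (rule sum.reindex[OF inj])
    also have "\<dots> = sum (?f \<circ> g) (UNIV \<inter> g -` T)" by simp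
    also have "\<dots> = (\<Sum>l\<in>UNIV. if l \<in> g -` T then (?f \<circ> g) l else 0)"
      by (rule sum.inter_restrict) simp
    also have "\<dots> = (\<Sum>l\<in>UNIV. of_int (c'$l) *\<^sub>R colR X (g l))"
      by (rule sum.cong) (auto simp: c'_def)
    also have "\<dots> = ivec (selm X g *v c')" by (simp only: ivec_mv)
    finally show "v \<in> ivec ` lat (selm X g)" unfolding lat_def by (rule image_eqI) simp
  qed
  show "ivec ` lat (selm X g) \<subseteq> int_gen X (range g)"
  proof
    fix v assume "v \<in> ivec ` lat (selm X g)"
    then obtain c where v: "v = ivec (selm X g *v c)" unfolding lat_def by blast
    let ?c = "\<lambda>e. c$(inv g e)"
    have "(\<Sum>e\<in>range g. of_int (?c e) *\<^sub>R colR X e) = (\<Sum>l\<in>UNIV. ((\<lambda>e. of_int (?c e) *\<^sub>R colR X e) \<circ> g) l)"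
      by (rule sum.reindex[OF assms])
    also have "\<dots> = (\<Sum>l\<in>UNIV. of_int (c$l) *\<^sub>R colR X (g l))"
      by (rule sum.cong) (simp_all add: inv_f_f[OF assms])
    finally have "v = (\<Sum>e\<in>range g. of_int (?c e) *\<^sub>R colR X e)" unfolding v ivec_mv by simp
    then show "v \<in> int_gen X (range g)" unfolding int_gen_def
      by (intro CollectI exI[of _ "range g"] exI[of _ ?c] conjI) simp_all
  qed
qed

lemma int_lattice_range: "int_lattice = range ivec"
proof
  show "int_lattice \<subseteq> range ivec"
  proof
    fix v assume "v \<in> int_lattice"
    then have "\<forall>i. v$i \<in> \<int>" by (simp add: int_lattice_def)
    then have "v = ivec (\<chi> i. \<lfloor>v$i\<rfloor>)" by (simp add: vec_eq_iff ivec_def)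
    then show "v \<in> range ivec" by blast
  qed
  show "range ivec \<subseteq> int_lattice" by (auto simp: int_lattice_def ivec_def)
qed

lemma mult_det:
  fixes X :: "'d::finite \<Rightarrow> 'e \<Rightarrow> int"
  assumes "inj g" "det (selm X g) \<noteq> 0"
  shows "int (mult X (range g)) = \<bar>det (selm X g)\<bar>"
proof -
  have "dim (colR X ` range g) = CARD('d)" using rank_det[of X g] assms(2) unfolding mrk_def by (simp add: dim_span)
  then have sp: "span (colR X ` range g) = UNIV" using dim_eq_full[of "colR X ` range g"] by simp
  let ?L = "lat (selm X g)"
  have "(\<lambda>v. (+) v ` int_gen X (range g)) ` (span (colR X ` range g) \<inter> int_lattice)
      = image ivec ` ((\<lambda>v. (+) v ` ?L) ` UNIV)"
  proof -
    have "(\<lambda>v. (+) v ` int_gen X (range g)) ` (span (colR X ` range g) \<inter> int_lattice)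
        = (\<lambda>v. (+) v ` (ivec ` ?L)) ` range ivec"
      unfolding sp int_lattice_range int_gen_range[OF assms(1)] by simp
    also have "\<dots> = (\<lambda>w. ivec ` ((+) w ` ?L)) ` UNIV"
      by (simp add: image_image ivec_add)
    also have "\<dots> = image ivec ` ((\<lambda>v. (+) v ` ?L) ` UNIV)" by (simp add: image_image)
    finally show ?thesis .
  qed
  moreover have "inj_on (image ivec) A" for A
    by (rule inj_onI) (simp add: inj_image_eq_iff[OF ivec_inj])
  ultimately have "mult X (range g) = idx (selm X g)"
    unfolding mult_def idx_def by (metis card_image)
  then show ?thesis using idx_det[OF assms(2)] by simp
qed

lemma same_det:
  fixes X Y :: "'d::finite \<Rightarrow> 'e \<Rightarrow> int"
  assumes "same_arith_matroid X Y" "inj g"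
  shows "\<bar>det (selm X g)\<bar> = \<bar>det (selm Y g)\<bar>"
proof -
  have r: "mrk X (range g) = mrk Y (range g)" "mult X (range g) = mult Y (range g)"
    using assms(1) unfolding same_arith_matroid_def by auto
  show ?thesis
  proof (cases "det (selm X g) = 0")
    case True
    then have "det (selm Y g) = 0" using rank_det[of X g] rank_det[of Y g] r(1) by auto
    then show ?thesis using True by simp
  next
    case False
    then have "det (selm Y g) \<noteq> 0" using rank_det[of X g] rank_det[of Y g] r(1) by auto
    then show ?thesis using mult_det[OF assms(2) False] mult_det[OF assms(2), of Y] r(2) by simp
  qed
qed

lemma selm_block: "selm (blockmat B Z) g $ r $ l = (case g l of Inl k \<Rightarrow> B r k | Inr j \<Rightarrow> Z r j)"
  by (simp add: selm_def blockmat_def)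

lemma diagB_nz:
  fixes B :: "'d::finite \<Rightarrow> 'd \<Rightarrow> int"
  assumes "\<forall>i k. i \<noteq> k \<longrightarrow> B i k = 0" "dim (span (range (colR B))) = CARD('d)"
  shows "B k k \<noteq> 0"
proof
  assume z: "B k k = 0"
  have "B i k = 0" for i using assms(1) z by (cases "i = k") auto
  then have c0: "colR B k = 0" by (simp add: colR_def vec_eq_iff)
  have "range (colR B) = colR B ` insert k (UNIV - {k})" by simp
  also have "\<dots> = insert (colR B k) (colR B ` (UNIV - {k}))" by (rule image_insert)
  finally have r: "range (colR B) = insert 0 (colR B ` (UNIV - {k}))" unfolding c0 .
  have sp: "span (range (colR B)) = span (colR B ` (UNIV - {k}))" unfolding r by (rule span_insert_0)
  have "dim (span (range (colR B))) = dim (colR B ` (UNIV - {k}))" unfolding sp by (rule dim_span)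
  also have "\<dots> \<le> card (colR B ` (UNIV - {k}))" by (rule dim_le_card') simp
  also have "\<dots> \<le> card (UNIV - {k})" by (rule card_image_le) simp
  also have "\<dots> < CARD('d)" by (simp add: card_Diff1_less)
  finally show False using assms(2) by simp
qed

definition g1 :: "'d \<Rightarrow> 'a \<Rightarrow> 'd \<Rightarrow> 'd + 'a" where
  "g1 i j l = (if l = i then Inr j else Inl l)"

lemma g1_inj: "inj (g1 i j)"
  by (rule injI) (auto simp: g1_def split: if_splits)

lemma det_g1:
  fixes B :: "'d::finite \<Rightarrow> 'd \<Rightarrow> int" and Z :: "'d \<Rightarrow> 'a \<Rightarrow> int"
  assumes Bd: "\<forall>i k. i \<noteq> k \<longrightarrow> B i k = 0"
  shows "det (selm (blockmat B Z) (g1 i j)) = Z i j * (\<Prod>r\<in>UNIV - {i}. B r r)"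
proof -
  let ?Y = "selm (blockmat B Z) (g1 i j)"
  have e: "?Y $ r $ l = (if l = i then Z r j else B r l)" for r l
    by (simp add: selm_block g1_def)
  have "det ?Y = (\<Prod>r\<in>UNIV. ?Y$r$r)"
  proof (rule det_only_id)
    fix p :: "'d \<Rightarrow> 'd" assume p: "p permutes UNIV" "p \<noteq> id"
    then obtain r where r: "p r \<noteq> r" by (auto simp: fun_eq_iff)
    have "\<exists>r'. p r' \<noteq> r' \<and> p r' \<noteq> i"
    proof (cases "p r = i")
      case True
      then have "p i \<noteq> i" using r permutes_inj[OF p(1)] by (metis injD)
      then show ?thesis by blast
    next
      case False then show ?thesis using r by blast
    qed
    then obtain r' where r': "p r' \<noteq> r'" "p r' \<noteq> i" by blast
    then have "?Y $ r' $ p r' = 0" using Bd by (simp add: e)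
    then show "(\<Prod>r\<in>UNIV. ?Y$r$p r) = 0" by (intro prod_zero) auto
  qed
  also have "\<dots> = ?Y$i$i * (\<Prod>r\<in>UNIV - {i}. ?Y$r$r)"
    by (simp add: prod.remove)
  also have "\<dots> = Z i j * (\<Prod>r\<in>UNIV - {i}. B r r)"
    by (simp add: e)
  finally show ?thesis .
qed

lemma abs_entry_eq:
  fixes B :: "'d::finite \<Rightarrow> 'd \<Rightarrow> int" and Z1 Z2 :: "'d \<Rightarrow> 'a \<Rightarrow> int"
  assumes Bd: "\<forall>i k. i \<noteq> k \<longrightarrow> B i k = 0" and Bnz: "\<And>k. B k k \<noteq> 0"
    and same: "same_arith_matroid (blockmat B Z1) (blockmat B Z2)"
  shows "\<bar>Z1 i j\<bar> = \<bar>Z2 i j\<bar>"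
proof -
  have "\<bar>Z1 i j * (\<Prod>r\<in>UNIV - {i}. B r r)\<bar> = \<bar>Z2 i j * (\<Prod>r\<in>UNIV - {i}. B r r)\<bar>"
  proof -
    have d1: "det (selm (blockmat B Z1) (g1 i j)) = Z1 i j * (\<Prod>r\<in>UNIV - {i}. B r r)"
      by (rule det_g1[OF Bd])
    have d2: "det (selm (blockmat B Z2) (g1 i j)) = Z2 i j * (\<Prod>r\<in>UNIV - {i}. B r r)"
      by (rule det_g1[OF Bd])
    show ?thesis using same_det[OF same g1_inj[of i j]] unfolding d1 d2 .
  qed
  moreover have "(\<Prod>r\<in>UNIV - {i}. B r r) \<noteq> 0" using Bnz by simp
  ultimately show ?thesis by (simp add: abs_mult)
qed

definition prv :: "nat \<Rightarrow> nat \<Rightarrow> nat" where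
  "prv k s = (if s = 0 then k - 1 else s - 1)"

definition pcyc :: "(nat \<Rightarrow> 'd) \<Rightarrow> nat \<Rightarrow> 'd \<Rightarrow> 'd" where
  "pcyc \<rho> k l = (if l \<in> \<rho> ` {..<k} then \<rho> (prv k (the_inv_into {..<k} \<rho> l)) else l)"

definition gcyc :: "(nat \<Rightarrow> 'd) \<Rightarrow> (nat \<Rightarrow> 'a) \<Rightarrow> nat \<Rightarrow> 'd \<Rightarrow> 'd + 'a" where
  "gcyc \<rho> \<gamma> k l = (if l \<in> \<rho> ` {..<k} then Inr (\<gamma> (the_inv_into {..<k} \<rho> l)) else Inl l)"

lemma prv_lt: "s < k \<Longrightarrow> prv k s < k"
  by (auto simp: prv_def)

lemma prv_inj: "s < k \<Longrightarrow> t < k \<Longrightarrow> prv k s = prv k t \<Longrightarrow> s = t"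
  by (auto simp: prv_def split: if_splits)

lemma gcyc_inj:
  assumes \<rho>i: "inj_on \<rho> {..<k}" and \<gamma>i: "inj_on \<gamma> {..<k}"
  shows "inj (gcyc \<rho> \<gamma> k)"
proof (rule injI)
  fix a b assume e: "gcyc \<rho> \<gamma> k a = gcyc \<rho> \<gamma> k b"
  let ?\<iota> = "the_inv_into {..<k} \<rho>"
  have \<rho>\<iota>: "l \<in> \<rho> ` {..<k} \<Longrightarrow> \<rho> (?\<iota> l) = l" for l using f_the_inv_into_f[OF \<rho>i] by simp
  have \<iota>lt: "l \<in> \<rho> ` {..<k} \<Longrightarrow> ?\<iota> l < k" for l using the_inv_into_into[OF \<rho>i, of l "{..<k}"] by simp
  show "a = b"
  proof (cases "a \<in> \<rho> ` {..<k}")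
    case True
    then have bR: "b \<in> \<rho> ` {..<k}" using e by (auto simp: gcyc_def split: if_splits)
    then have "\<gamma> (?\<iota> a) = \<gamma> (?\<iota> b)" using e True by (simp add: gcyc_def)
    then have "?\<iota> a = ?\<iota> b" using \<gamma>i \<iota>lt[OF True] \<iota>lt[OF bR] by (simp add: inj_on_def)
    then show ?thesis using \<rho>\<iota>[OF True] \<rho>\<iota>[OF bR] by metis
  next
    case False
    then have "b \<notin> \<rho> ` {..<k}" using e by (auto simp: gcyc_def split: if_splits)
    then show ?thesis using e False by (simp add: gcyc_def)
  qed
qed

lemma pcyc_perm:
  fixes \<rho> :: "nat \<Rightarrow> 'd::finite"
  assumes \<rho>i: "inj_on \<rho> {..<k}"
  shows "pcyc \<rho> k permutes UNIV"
proof -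
  let ?\<iota> = "the_inv_into {..<k} \<rho>"
  let ?R = "\<rho> ` {..<k}"
  have \<rho>\<iota>: "l \<in> ?R \<Longrightarrow> \<rho> (?\<iota> l) = l" for l using f_the_inv_into_f[OF \<rho>i] by simp
  have \<iota>lt: "l \<in> ?R \<Longrightarrow> ?\<iota> l < k" for l using the_inv_into_into[OF \<rho>i, of l "{..<k}"] by simp
  have inj: "inj (pcyc \<rho> k)"
  proof (rule injI)
    fix a b assume e: "pcyc \<rho> k a = pcyc \<rho> k b"
    have inR: "l \<in> ?R \<Longrightarrow> pcyc \<rho> k l \<in> ?R" for l
      using prv_lt[OF \<iota>lt] by (simp add: pcyc_def)
    show "a = b"
    proof (cases "a \<in> ?R")
      case True
      have bR: "b \<in> ?R"
      proof (rule ccontr)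
        assume "b \<notin> ?R"
        then have "pcyc \<rho> k b = b" by (simp add: pcyc_def)
        then show False using inR[OF True] e \<open>b \<notin> ?R\<close> by simp
      qed
      have "\<rho> (prv k (?\<iota> a)) = \<rho> (prv k (?\<iota> b))" using e True bR by (simp add: pcyc_def)
      then have "prv k (?\<iota> a) = prv k (?\<iota> b)"
        using \<rho>i prv_lt[OF \<iota>lt[OF True]] prv_lt[OF \<iota>lt[OF bR]] by (simp add: inj_on_def)
      then have "?\<iota> a = ?\<iota> b" using prv_inj \<iota>lt True bR by blast
      then show ?thesis using \<rho>\<iota>[OF True] \<rho>\<iota>[OF bR] by metis
    next
      case False
      have bR: "b \<notin> ?R"
      proof
        assume "b \<in> ?R"
        then have "pcyc \<rho> k b \<in> ?R" by (rule inR)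
        moreover have "pcyc \<rho> k a = a" using False by (simp add: pcyc_def)
        ultimately show False using e False by simp
      qed
      then show ?thesis using e False by (simp add: pcyc_def)
    qed
  qed
  then have "bij (pcyc \<rho> k)" using finite_UNIV_inj_surj[of "pcyc \<rho> k"] by (simp add: bij_def)
  then show ?thesis by (intro bij_imp_permutes) (simp_all add: bij_betw_def)
qed

lemma cycle_det:
  fixes B :: "'d::finite \<Rightarrow> 'd \<Rightarrow> int" and Z :: "'d \<Rightarrow> 'a \<Rightarrow> int"
    and \<rho> :: "nat \<Rightarrow> 'd" and \<gamma> :: "nat \<Rightarrow> 'a"
  assumes Bd: "\<forall>i k. i \<noteq> k \<longrightarrow> B i k = 0"
    and k2: "2 \<le> k" and \<rho>i: "inj_on \<rho> {..<k}"
    and Zs: "\<And>s t. s < k \<Longrightarrow> t < k \<Longrightarrow> Z (\<rho> s) (\<gamma> t) \<noteq> 0 \<longleftrightarrow> (t = s \<or> s = Suc t \<or> (s = 0 \<and> t = k - 1))"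
  shows "det (selm (blockmat B Z) (gcyc \<rho> \<gamma> k)) = (\<Prod>r\<in>UNIV - \<rho>`{..<k}. B r r) *
     ((\<Prod>s<k. Z (\<rho> s) (\<gamma> s)) + of_int (sign (pcyc \<rho> k)) * (\<Prod>s<k. Z (\<rho> s) (\<gamma> (prv k s))))"
proof -
  let ?R = "\<rho> ` {..<k}"
  let ?\<iota> = "the_inv_into {..<k} \<rho>"
  let ?Y = "selm (blockmat B Z) (gcyc \<rho> \<gamma> k)"
  let ?pc = "pcyc \<rho> k"
  have \<iota>\<rho>: "s < k \<Longrightarrow> ?\<iota> (\<rho> s) = s" for s using the_inv_into_f_f[OF \<rho>i] by simp
  have \<rho>\<iota>: "l \<in> ?R \<Longrightarrow> \<rho> (?\<iota> l) = l" for l using f_the_inv_into_f[OF \<rho>i] by simp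
  have \<iota>lt: "l \<in> ?R \<Longrightarrow> ?\<iota> l < k" for l using the_inv_into_into[OF \<rho>i, of l "{..<k}"] by simp
  have Ye: "?Y$r$l = (if l \<in> ?R then Z r (\<gamma> (?\<iota> l)) else B r l)" for r l
    by (simp add: selm_block gcyc_def)
  have YR: "t < k \<Longrightarrow> ?Y$r$(\<rho> t) = Z r (\<gamma> t)" for r t by (simp add: Ye \<iota>\<rho>)
  have pcR: "s < k \<Longrightarrow> ?pc (\<rho> s) = \<rho> (prv k s)" for s by (simp add: pcyc_def \<iota>\<rho>)
  have pcn: "l \<notin> ?R \<Longrightarrow> ?pc l = l" for l by (simp add: pcyc_def)
  have pcp: "?pc permutes UNIV" using pcyc_perm[OF \<rho>i] .
  have pcne: "id \<noteq> ?pc"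
  proof
    assume "id = ?pc"
    then have "\<rho> 0 = \<rho> (k - 1)" using pcR[of 0] k2 by (simp add: prv_def)
    moreover have "0 \<in> {..<k}" "k - 1 \<in> {..<k}" using k2 by auto
    ultimately have "0 = k - 1" using inj_onD[OF \<rho>i] by blast
    then show False using k2 by simp
  qed
  have key: "p = id \<or> p = ?pc" if p: "p permutes UNIV" and nz: "(\<Prod>r\<in>UNIV. ?Y$r$p r) \<noteq> 0" for p
  proof -
    have ent: "?Y$r$p r \<noteq> 0" for r using nz by (metis UNIV_I finite prod_zero)
    have fix_out: "p l = l" if l: "l \<notin> ?R" for l
    proof -
      let ?r = "inv p l"
      have pr: "p ?r = l" using permutes_inverses(1)[OF p] .
      then have "B ?r l \<noteq> 0" using ent[of ?r] l Ye by simp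
      then have "?r = l" using Bd by blast
      then show ?thesis using pr by simp
    qed
    have inR: "p (\<rho> s) \<in> ?R" if s: "s < k" for s
    proof (rule ccontr)
      assume n: "p (\<rho> s) \<notin> ?R"
      then have "p (p (\<rho> s)) = p (\<rho> s)" using fix_out by blast
      then have "p (\<rho> s) = \<rho> s" using permutes_inj[OF p] by (meson injD)
      then show False using n s by auto
    qed
    define \<sigma> where "\<sigma> s = ?\<iota> (p (\<rho> s))" for s
    have \<sigma>lt: "s < k \<Longrightarrow> \<sigma> s < k" for s using inR \<iota>lt \<sigma>_def by simp
    have p\<sigma>: "s < k \<Longrightarrow> p (\<rho> s) = \<rho> (\<sigma> s)" for s using inR \<rho>\<iota> \<sigma>_def by simp
    have \<sigma>opt: "\<sigma> s = s \<or> s = Suc (\<sigma> s) \<or> (s = 0 \<and> \<sigma> s = k - 1)" if s: "s < k" for s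
    proof -
      have "?Y$(\<rho> s)$(\<rho> (\<sigma> s)) \<noteq> 0" using ent[of "\<rho> s"] p\<sigma>[OF s] by simp
      then have "Z (\<rho> s) (\<gamma> (\<sigma> s)) \<noteq> 0" using YR[OF \<sigma>lt[OF s]] by simp
      then show ?thesis using Zs[OF s \<sigma>lt[OF s]] by blast
    qed
    have \<sigma>inj: "s = t" if "s < k" "t < k" "\<sigma> s = \<sigma> t" for s t
    proof -
      have "p (\<rho> s) = p (\<rho> t)" using p\<sigma> that by simp
      then have "\<rho> s = \<rho> t" using permutes_inj[OF p] by (meson injD)
      then show ?thesis using \<rho>i that by (simp add: inj_on_def)
    qed
    show "p = id \<or> p = ?pc"
    proof (cases "\<sigma> 0 = 0")
      case True
      have all: "s < k \<Longrightarrow> \<sigma> s = s" for s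
      proof (induction s)
        case 0 then show ?case using True by simp
      next
        case (Suc s)
        then have IH: "\<sigma> s = s" by simp
        from \<sigma>opt[OF Suc.prems] show ?case
        proof (elim disjE)
          assume "Suc s = Suc (\<sigma> (Suc s))"
          then have "\<sigma> (Suc s) = \<sigma> s" using IH by simp
          then have "Suc s = s" using \<sigma>inj Suc.prems by simp
          then show ?case by simp
        qed auto
      qed
      have "p = id"
      proof
        fix l show "p l = id l"
        proof (cases "l \<in> ?R")
          case True
          then obtain s where s: "s < k" "l = \<rho> s" by auto
          then show ?thesis using p\<sigma>[OF s(1)] all[OF s(1)] by simp
        next
          case False then show ?thesis using fix_out by simp
        qed
      qed
      then show ?thesis by simp
    next
      case False
      then have \<sigma>0: "\<sigma> 0 = k - 1" using \<sigma>opt[of 0] k2 by auto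
      have down: "\<sigma> s = s - 1" if "1 \<le> s" "s < k" for s
        using that
      proof (induction "k - s" arbitrary: s rule: less_induct)
        case less
        from \<sigma>opt[OF less.prems(2)] show ?case
        proof (elim disjE)
          assume a: "\<sigma> s = s"
          show ?case
          proof (cases "s = k - 1")
            case True
            then have "\<sigma> s = \<sigma> 0" using a \<sigma>0 by simp
            then have "s = 0" using \<sigma>inj less.prems k2 by simp
            then show ?thesis using less.prems by simp
          next
            case False
            then have "Suc s < k" using less.prems by simp
            then have "\<sigma> (Suc s) = s" using less.hyps[of "Suc s"] less.prems by simp
            then have "\<sigma> (Suc s) = \<sigma> s" using a by simp
            then have "Suc s = s" using \<sigma>inj \<open>Suc s < k\<close> less.prems by blast
            then show ?thesis by simp
          qed
        next
          assume "s = Suc (\<sigma> s)" then show ?case by simp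
        next
          assume "s = 0 \<and> \<sigma> s = k - 1" then show ?case using less.prems by simp
        qed
      qed
      have "p = ?pc"
      proof
        fix l show "p l = ?pc l"
        proof (cases "l \<in> ?R")
          case True
          then obtain s where s: "s < k" "l = \<rho> s" by auto
          have "\<sigma> s = prv k s"
          proof (cases "s = 0")
            case True then show ?thesis using \<sigma>0 by (simp add: prv_def)
          next
            case False then show ?thesis using down[of s] s(1) by (simp add: prv_def)
          qed
          then show ?thesis using p\<sigma>[OF s(1)] pcR[OF s(1)] s(2) by simp
        next
          case False then show ?thesis using fix_out pcn by simp
        qed
      qed
      then show ?thesis by simp
    qed
  qed
  have det2: "det ?Y = of_int (sign (id::'d \<Rightarrow> 'd)) * (\<Prod>r\<in>UNIV. ?Y$r$id r) + of_int (sign ?pc) * (\<Prod>r\<in>UNIV. ?Y$r$?pc r)"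
  proof (rule det_two)
    show "id permutes UNIV" by simp
    show "?pc permutes UNIV" by (rule pcp)
    show "id \<noteq> ?pc" by (rule pcne)
    show "(\<Prod>i\<in>UNIV. ?Y$i$p i) = 0" if "p permutes UNIV" "p \<noteq> id" "p \<noteq> ?pc" for p
      using key[of p] that by blast
  qed
  have split: "(\<Prod>r\<in>UNIV. f r) = (\<Prod>r\<in>UNIV - ?R. f r) * (\<Prod>s<k. f (\<rho> s))" for f :: "'d \<Rightarrow> int"
  proof -
    have "(\<Prod>r\<in>UNIV. f r) = (\<Prod>r\<in>UNIV - ?R. f r) * (\<Prod>r\<in>?R. f r)"
      by (rule prod.subset_diff) auto
    also have "(\<Prod>r\<in>?R. f r) = (\<Prod>s<k. f (\<rho> s))"
      using prod.reindex[OF \<rho>i, of f] by (simp add: o_def)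
    finally show ?thesis .
  qed
  have t1: "(\<Prod>r\<in>UNIV. ?Y$r$id r) = (\<Prod>r\<in>UNIV - ?R. B r r) * (\<Prod>s<k. Z (\<rho> s) (\<gamma> s))"
  proof -
    have "(\<Prod>r\<in>UNIV. ?Y$r$id r) = (\<Prod>r\<in>UNIV - ?R. ?Y$r$r) * (\<Prod>s<k. ?Y$(\<rho> s)$(\<rho> s))"
      using split[of "\<lambda>r. ?Y$r$r"] by simp
    also have "(\<Prod>r\<in>UNIV - ?R. ?Y$r$r) = (\<Prod>r\<in>UNIV - ?R. B r r)"
      by (rule prod.cong) (simp_all add: Ye)
    also have "(\<Prod>s<k. ?Y$(\<rho> s)$(\<rho> s)) = (\<Prod>s<k. Z (\<rho> s) (\<gamma> s))"
      by (rule prod.cong) (simp_all add: YR)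
    finally show ?thesis .
  qed
  have t2: "(\<Prod>r\<in>UNIV. ?Y$r$?pc r) = (\<Prod>r\<in>UNIV - ?R. B r r) * (\<Prod>s<k. Z (\<rho> s) (\<gamma> (prv k s)))"
  proof -
    have "(\<Prod>r\<in>UNIV. ?Y$r$?pc r) = (\<Prod>r\<in>UNIV - ?R. ?Y$r$?pc r) * (\<Prod>s<k. ?Y$(\<rho> s)$(?pc (\<rho> s)))"
      using split[of "\<lambda>r. ?Y$r$?pc r"] by simp
    also have "(\<Prod>r\<in>UNIV - ?R. ?Y$r$?pc r) = (\<Prod>r\<in>UNIV - ?R. B r r)"
      by (rule prod.cong) (simp_all add: Ye pcn)
    also have "(\<Prod>s<k. ?Y$(\<rho> s)$(?pc (\<rho> s))) = (\<Prod>s<k. Z (\<rho> s) (\<gamma> (prv k s)))"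
      by (rule prod.cong) (simp_all add: pcR YR prv_lt)
    finally show ?thesis .
  qed
  show ?thesis using det2 t1 t2 by (simp add: algebra_simps)
qed

lemma adj_sym: "adj F x y \<Longrightarrow> adj F y x" by (auto simp: adj_def)
lemma adj_LR: "adj F (Inl a) (Inr b) \<longleftrightarrow> (a, b) \<in> F" by (auto simp: adj_def)
lemma adj_RL: "adj F (Inr b) (Inl a) \<longleftrightarrow> (a, b) \<in> F" by (auto simp: adj_def)
lemma adj_side: "adj F x y \<Longrightarrow> isl x \<longleftrightarrow> \<not> isl y" by (auto simp: adj_def)

lemma relpow_sym:
  assumes sym: "\<And>x y. (x,y) \<in> R \<Longrightarrow> (y,x) \<in> R" and ab: "(a,b) \<in> R^^n"
  shows "(b,a) \<in> R^^n"
proof -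
  obtain f where f: "f 0 = a" "f n = b" "\<forall>i<n. (f i, f (Suc i)) \<in> R"
    using ab unfolding relpow_fun_conv by blast
  let ?g = "\<lambda>i. f (n - i)"
  have "\<forall>i<n. (?g i, ?g (Suc i)) \<in> R"
  proof (intro allI impI)
    fix i assume i: "i < n"
    have "(f (n - Suc i), f (Suc (n - Suc i))) \<in> R" using f(3) i by simp
    moreover have "Suc (n - Suc i) = n - i" using i by simp
    ultimately show "(?g i, ?g (Suc i)) \<in> R" using sym by simp
  qed
  moreover have "?g 0 = b" "?g n = a" using f by simp_all
  ultimately show ?thesis unfolding relpow_fun_conv by (intro exI[of _ ?g]) auto
qed

lemma walk_sub:
  assumes "\<forall>t<m. (w t, w (Suc t)) \<in> R" "a \<le> b" "b \<le> m"
  shows "(w a, w b) \<in> R^^(b - a)"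
proof -
  have "\<forall>i<b-a. (w (a+i), w (Suc (a+i))) \<in> R" using assms by auto
  then show ?thesis unfolding relpow_fun_conv using assms by (intro exI[of _ "\<lambda>t. w (a + t)"]) auto
qed

lemma shortest_cycle:
  fixes F H :: "('d \<times> 'a) set"
  assumes H0: "(i0, j0) \<in> H" and conn: "\<forall>(i,j)\<in>H. (Inl i, Inr j) \<in> {(x,y). adj F x y}\<^sup>*"
    and FH: "F \<inter> H = {}"
  shows "\<exists>k \<rho> \<gamma>. 2 \<le> k \<and> inj_on \<rho> {..<k} \<and> inj_on \<gamma> {..<k} \<and> (\<rho> 0, \<gamma> (k - 1)) \<in> H \<and>
     (\<forall>s<k. (\<rho> s, \<gamma> s) \<in> F) \<and> (\<forall>s. Suc s < k \<longrightarrow> (\<rho> (Suc s), \<gamma> s) \<in> F) \<and>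
     (\<forall>s<k. \<forall>t<k. (\<rho> s, \<gamma> t) \<in> F \<union> H \<longrightarrow> (t = s \<or> s = Suc t \<or> (s = 0 \<and> t = k - 1)))"
proof -
  define R where "R = {(x,y). adj F x y}"
  have Rsym: "\<And>x y. (x,y) \<in> R \<Longrightarrow> (y,x) \<in> R" unfolding R_def using adj_sym by blast
  define Q where "Q n \<longleftrightarrow> (\<exists>(i,j)\<in>H. (Inl i, Inr j) \<in> R^^n)" for n
  have "(Inl i0, Inr j0) \<in> R\<^sup>*" using H0 conn unfolding R_def by blast
  then obtain n0 where "(Inl i0, Inr j0) \<in> R^^n0" using rtrancl_power by blast
  then have ex: "\<exists>n. Q n" using H0 unfolding Q_def by blast
  define m where "m = (LEAST n. Q n)"
  have Qm: "Q m" unfolding m_def using ex by (rule LeastI_ex)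
  have minQ: "\<not> Q n" if "n < m" for n using not_less_Least[of n Q] that unfolding m_def by blast
  obtain i j where ij: "(i,j) \<in> H" "(Inl i, Inr j) \<in> R^^m" using Qm unfolding Q_def by blast
  obtain w where w0: "w 0 = Inl i" and wm: "w m = Inr j" and ws: "\<forall>t<m. (w t, w (Suc t)) \<in> R"
    using ij(2) unfolding relpow_fun_conv by blast
  have short: "Q (a + c + (m - b))" if ab: "a \<le> b" "b \<le> m" and c: "(w a, w b) \<in> R^^c" for a b c
  proof -
    have 1: "(w 0, w a) \<in> R^^a" using walk_sub[OF ws, of 0 a] ab by simp
    have 2: "(w b, w m) \<in> R^^(m - b)" using walk_sub[OF ws, of b m] ab by simp
    have "(w 0, w m) \<in> (R^^a O R^^c) O R^^(m - b)" using 1 2 c by blast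
    then have "(w 0, w m) \<in> R^^(a + c + (m - b))" by (simp add: relpow_add)
    then show ?thesis using ij(1) w0 wm unfolding Q_def by auto
  qed
  have W3: "w a \<noteq> w b" if "a < b" "b \<le> m" for a b
  proof
    assume "w a = w b"
    then have "(w a, w b) \<in> R^^0" by simp
    then have "Q (a + 0 + (m - b))" by (intro short) (use that in auto)
    moreover have "a + 0 + (m - b) < m" using that by simp
    ultimately show False using minQ by blast
  qed
  have W2a: "(w a, w b) \<notin> R" if "a + 1 < b" "b \<le> m" for a b
  proof
    assume "(w a, w b) \<in> R"
    then have "(w a, w b) \<in> R^^1" by simp
    then have "Q (a + 1 + (m - b))" by (intro short) (use that in auto)
    moreover have "a + 1 + (m - b) < m" using that by simp
    ultimately show False using minQ by blast
  qed
  have W2b: "False" if "a < b" "b \<le> m" "\<not> (a = 0 \<and> b = m)" "(i', j') \<in> H"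
    "(w a = Inl i' \<and> w b = Inr j') \<or> (w a = Inr j' \<and> w b = Inl i')" for a b i' j'
  proof -
    have p: "(w a, w b) \<in> R^^(b - a)" using walk_sub[OF ws, of a b] that by simp
    have "(Inl i', Inr j') \<in> R^^(b - a)"
      using that(5)
    proof
      assume "w a = Inl i' \<and> w b = Inr j'" then show ?thesis using p by simp
    next
      assume "w a = Inr j' \<and> w b = Inl i'" then show ?thesis using relpow_sym[OF Rsym p] by simp
    qed
    then have "Q (b - a)" using that(4) unfolding Q_def by blast
    moreover have "b - a < m" using that by auto
    ultimately show False using minQ by blast
  qed
  have side: "t \<le> m \<Longrightarrow> isl (w t) \<longleftrightarrow> even t" for t
  proof (induction t)
    case 0 then show ?case using w0 by simp
  next
    case (Suc t)
    then have "(w t, w (Suc t)) \<in> R" using ws by simp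
    then have "isl (w t) \<longleftrightarrow> \<not> isl (w (Suc t))" unfolding R_def using adj_side by blast
    then show ?case using Suc by simp
  qed
  have m_odd: "odd m" using side[of m] wm by simp
  have m1: "m \<noteq> 1"
  proof
    assume "m = 1"
    then have "(w 0, w 1) \<in> R" using ws by simp
    then have "(i, j) \<in> F" using w0 wm \<open>m = 1\<close> unfolding R_def by (simp add: adj_LR)
    then show False using FH ij(1) by blast
  qed
  define k where "k = (m + 1) div 2"
  from m_odd obtain q where q: "m = 2 * q + 1" by (rule oddE)
  have q1: "1 \<le> q" using q m1 by simp
  have kq: "k = q + 1" unfolding k_def q by simp
  have k2: "2 \<le> k" using kq q1 by simp
  have mk: "m = 2 * (k - 1) + 1" using q kq by simp
  have mk2: "m + 1 = 2 * k" using q kq by simp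
  define \<rho> where "\<rho> s = projl (w (2 * s))" for s
  define \<gamma> where "\<gamma> s = projr (w (2 * s + 1))" for s
  have w\<rho>: "w (2 * s) = Inl (\<rho> s)" if "s < k" for s
  proof -
    have "isl (w (2 * s))" using side[of "2 * s"] that mk by simp
    then show ?thesis unfolding \<rho>_def by simp
  qed
  have w\<gamma>: "w (2 * s + 1) = Inr (\<gamma> s)" if "s < k" for s
  proof -
    have "\<not> isl (w (2 * s + 1))" using side[of "2 * s + 1"] that mk by simp
    then show ?thesis unfolding \<gamma>_def by simp
  qed
  have inj\<rho>: "inj_on \<rho> {..<k}"
  proof (rule inj_onI)
    fix s s' assume s: "s \<in> {..<k}" and s': "s' \<in> {..<k}" and e: "\<rho> s = \<rho> s'"
    have we: "w (2 * s) = w (2 * s')" using w\<rho> s s' e by simp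
    show "s = s'"
    proof (rule ccontr)
      assume "s \<noteq> s'"
      then consider "s < s'" | "s' < s" by linarith
      then show False
      proof cases
        case 1
        have "2 * s' \<le> m" using s' mk2 by simp
        then show False using W3[of "2 * s" "2 * s'"] we 1 by simp
      next
        case 2
        have "2 * s \<le> m" using s mk2 by simp
        then show False using W3[of "2 * s'" "2 * s"] we 2 by simp
      qed
    qed
  qed
  have inj\<gamma>: "inj_on \<gamma> {..<k}"
  proof (rule inj_onI)
    fix s s' assume s: "s \<in> {..<k}" and s': "s' \<in> {..<k}" and e: "\<gamma> s = \<gamma> s'"
    have we: "w (2 * s + 1) = w (2 * s' + 1)" using w\<gamma> s s' e by simp
    show "s = s'"
    proof (rule ccontr)
      assume "s \<noteq> s'"
      then consider "s < s'" | "s' < s" by linarith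
      then show False
      proof cases
        case 1
        have "2 * s' + 1 \<le> m" using s' mk2 by simp
        then show False using W3[of "2 * s + 1" "2 * s' + 1"] we 1 by simp
      next
        case 2
        have "2 * s + 1 \<le> m" using s mk2 by simp
        then show False using W3[of "2 * s' + 1" "2 * s + 1"] we 2 by simp
      qed
    qed
  qed
  have H1: "(\<rho> 0, \<gamma> (k - 1)) \<in> H"
  proof -
    have "\<rho> 0 = i" using w\<rho>[of 0] w0 k2 by simp
    moreover have "\<gamma> (k - 1) = j" using w\<gamma>[of "k - 1"] wm mk k2 by simp
    ultimately show ?thesis using ij(1) by simp
  qed
  have F1: "(\<rho> s, \<gamma> s) \<in> F" if "s < k" for s
  proof -
    have "(w (2 * s), w (Suc (2 * s))) \<in> R" using ws that mk by simp
    then show ?thesis using w\<rho>[OF that] w\<gamma>[OF that] unfolding R_def by (simp add: adj_LR)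
  qed
  have F2: "(\<rho> (Suc s), \<gamma> s) \<in> F" if "Suc s < k" for s
  proof -
    have "(w (2 * s + 1), w (Suc (2 * s + 1))) \<in> R" using ws that mk by simp
    moreover have "Suc (2 * s + 1) = 2 * Suc s" by simp
    ultimately have "(w (2 * s + 1), w (2 * Suc s)) \<in> R" by metis
    then show ?thesis using w\<rho>[OF that] w\<gamma>[of s] that unfolding R_def by (simp add: adj_RL)
  qed
  have NE: "t = s \<or> s = Suc t \<or> (s = 0 \<and> t = k - 1)"
    if st: "s < k" "t < k" and e: "(\<rho> s, \<gamma> t) \<in> F \<union> H" for s t
  proof (rule ccontr)
    assume n: "\<not> (t = s \<or> s = Suc t \<or> (s = 0 \<and> t = k - 1))"
    show False
    proof (cases "s \<le> t")
      case True
      then have lt: "2 * s + 1 < 2 * t + 1" "2 * t + 1 \<le> m" using n st mk by auto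
      show False
      proof (cases "(\<rho> s, \<gamma> t) \<in> F")
        case True
        then have "(w (2 * s), w (2 * t + 1)) \<in> R" using w\<rho>[OF st(1)] w\<gamma>[OF st(2)] unfolding R_def by (simp add: adj_LR)
        then show False using W2a lt by blast
      next
        case False
        then have h: "(\<rho> s, \<gamma> t) \<in> H" using e by blast
        have "\<not> (2 * s = 0 \<and> 2 * t + 1 = m)" using n mk by auto
        then show False using W2b[of "2 * s" "2 * t + 1" "\<rho> s" "\<gamma> t"] lt h w\<rho>[OF st(1)] w\<gamma>[OF st(2)] by simp
      qed
    next
      case False
      then have lt: "2 * t + 1 + 1 < 2 * s" "2 * s \<le> m" using n st mk by auto
      show False
      proof (cases "(\<rho> s, \<gamma> t) \<in> F")
        case True
        then have "(w (2 * t + 1), w (2 * s)) \<in> R" using w\<rho>[OF st(1)] w\<gamma>[OF st(2)] unfolding R_def by (simp add: adj_RL)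
        then show False using W2a lt by blast
      next
        case False
        then have h: "(\<rho> s, \<gamma> t) \<in> H" using e by blast
        then show False using W2b[of "2 * t + 1" "2 * s" "\<rho> s" "\<gamma> t"] lt w\<rho>[OF st(1)] w\<gamma>[OF st(2)] by simp
      qed
    qed
  qed
  show ?thesis
    using k2 inj\<rho> inj\<gamma> H1 F1 F2 NE by blast
qed

lemma abs_pm: "(x::int) \<noteq> 0 \<Longrightarrow> y \<noteq> 0 \<Longrightarrow> \<bar>x + y\<bar> \<noteq> \<bar>x - y\<bar>"
  by arith

theorem lemma3p5:
  fixes B :: "'d::finite \<Rightarrow> 'd \<Rightarrow> int"
    and A A' A'' :: "'d \<Rightarrow> 'a::finite \<Rightarrow> int"
    and P :: "('d \<times> 'a) set"
    and \<sigma> :: "'d \<times> 'a \<Rightarrow> int"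
  assumes X_rank: "mrk (blockmat B A) UNIV = CARD('d)"
    and B_diag: "\<forall>i k. i \<noteq> k \<longrightarrow> B i k = 0"
    and B_nonneg: "\<forall>i k. B i k \<ge> 0"
    and B_rank: "dim (span (range (colR B))) = CARD('d)"
    and P_path: "coordinatizing_path A P"
    and sigma: "\<forall>p\<in>P. \<sigma> p \<in> {-1, 1}"
    and same': "same_arith_matroid (blockmat B A') (blockmat B A)"
    and same'': "same_arith_matroid (blockmat B A'') (blockmat B A)"
    and sign': "\<forall>(i, j)\<in>P. A' i j = \<sigma> (i, j) * A i j"
    and sign'': "\<forall>(i, j)\<in>P. A'' i j = \<sigma> (i, j) * A i j"
  shows "blockmat B A' = blockmat B A''"
proof -
  have Bnz: "\<And>k. B k k \<noteq> 0" using diagB_nz[OF B_diag B_rank] .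
  have a1: "\<And>i j. \<bar>A' i j\<bar> = \<bar>A i j\<bar>" using abs_entry_eq[OF B_diag Bnz same'] .
  have a2: "\<And>i j. \<bar>A'' i j\<bar> = \<bar>A i j\<bar>" using abs_entry_eq[OF B_diag Bnz same''] .
  define F where "F = {(i,j). A i j \<noteq> 0 \<and> A' i j = A'' i j}"
  define H where "H = {(i,j). A i j \<noteq> 0 \<and> A' i j \<noteq> A'' i j}"
  have FH: "F \<inter> H = {}" by (auto simp: F_def H_def)
  have PG: "P \<subseteq> graph_edges A" using P_path unfolding coordinatizing_path_def by blast
  have PF: "P \<subseteq> F"
  proof
    fix e assume e: "e \<in> P"
    obtain i j where ij: "e = (i, j)" by (cases e)
    have "A i j \<noteq> 0" using PG e ij by (auto simp: graph_edges_def)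
    moreover have "A' i j = A'' i j"
    proof -
      have ijP: "(i, j) \<in> P" using e ij by simp
      have "A' i j = \<sigma> (i, j) * A i j" using bspec[OF sign' ijP] by simp
      moreover have "A'' i j = \<sigma> (i, j) * A i j" using bspec[OF sign'' ijP] by simp
      ultimately show ?thesis by simp
    qed
    ultimately show "e \<in> F" using ij by (simp add: F_def)
  qed
  have conn: "\<forall>(i,j)\<in>H. (Inl i, Inr j) \<in> {(x,y). adj F x y}\<^sup>*"
  proof (intro ballI)
    fix e assume "e \<in> H"
    then obtain i j where e: "e = (i,j)" "A i j \<noteq> 0" by (auto simp: H_def)
    have "adj (graph_edges A) (Inl i) (Inr j)" by (simp add: adj_LR graph_edges_def e)
    then have "connected_in (graph_edges A) (Inl i) (Inr j)" unfolding connected_in_def by auto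
    then have "connected_in P (Inl i) (Inr j)" using P_path unfolding coordinatizing_path_def by blast
    then have "(Inl i, Inr j) \<in> {(x,y). adj P x y}\<^sup>*" unfolding connected_in_def .
    moreover have "{(x,y). adj P x y} \<subseteq> {(x,y). adj F x y}" using PF by (auto simp: adj_def)
    ultimately have "(Inl i, Inr j) \<in> {(x,y). adj F x y}\<^sup>*" using rtrancl_mono by blast
    then show "case e of (i, j) \<Rightarrow> (Inl i, Inr j) \<in> {(x,y). adj F x y}\<^sup>*" using e by simp
  qed
  have eqall: "A' = A''"
  proof (rule ccontr)
    assume "A' \<noteq> A''"
    then obtain i0 j0 where ne: "A' i0 j0 \<noteq> A'' i0 j0" by (auto simp: fun_eq_iff)
    have "A i0 j0 \<noteq> 0"
    proof
      assume "A i0 j0 = 0"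
      then have "A' i0 j0 = 0" "A'' i0 j0 = 0" using a1[of i0 j0] a2[of i0 j0] by auto
      then show False using ne by simp
    qed
    then have H0: "(i0, j0) \<in> H" using ne by (simp add: H_def)
    obtain k \<rho> \<gamma> where k2: "2 \<le> k" and inj\<rho>: "inj_on \<rho> {..<k}" and inj\<gamma>: "inj_on \<gamma> {..<k}"
      and H1: "(\<rho> 0, \<gamma> (k - 1)) \<in> H"
      and F1: "\<forall>s<k. (\<rho> s, \<gamma> s) \<in> F" and F2: "\<forall>s. Suc s < k \<longrightarrow> (\<rho> (Suc s), \<gamma> s) \<in> F"
      and NE: "\<forall>s<k. \<forall>t<k. (\<rho> s, \<gamma> t) \<in> F \<union> H \<longrightarrow> (t = s \<or> s = Suc t \<or> (s = 0 \<and> t = k - 1))"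
      using shortest_cycle[OF H0 conn FH] by blast
    have GFH: "\<And>a b. A a b \<noteq> 0 \<longleftrightarrow> (a,b) \<in> F \<union> H" by (auto simp: F_def H_def)
    have nz': "\<And>a b. A' a b \<noteq> 0 \<longleftrightarrow> A a b \<noteq> 0" using a1 by (metis abs_eq_0)
    have nz'': "\<And>a b. A'' a b \<noteq> 0 \<longleftrightarrow> A a b \<noteq> 0" using a2 by (metis abs_eq_0)
    have ZsA: "A (\<rho> s) (\<gamma> t) \<noteq> 0 \<longleftrightarrow> (t = s \<or> s = Suc t \<or> (s = 0 \<and> t = k - 1))"
      if st: "s < k" "t < k" for s t
    proof
      assume "A (\<rho> s) (\<gamma> t) \<noteq> 0"
      then show "t = s \<or> s = Suc t \<or> (s = 0 \<and> t = k - 1)" using NE st GFH by blast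
    next
      assume "t = s \<or> s = Suc t \<or> (s = 0 \<and> t = k - 1)"
      then have "(\<rho> s, \<gamma> t) \<in> F \<union> H" using F1 F2 H1 st by auto
      then show "A (\<rho> s) (\<gamma> t) \<noteq> 0" using GFH by blast
    qed
    have Zs': "\<And>s t. s < k \<Longrightarrow> t < k \<Longrightarrow> A' (\<rho> s) (\<gamma> t) \<noteq> 0 \<longleftrightarrow> (t = s \<or> s = Suc t \<or> (s = 0 \<and> t = k - 1))"
      using ZsA nz' by blast
    have Zs'': "\<And>s t. s < k \<Longrightarrow> t < k \<Longrightarrow> A'' (\<rho> s) (\<gamma> t) \<noteq> 0 \<longleftrightarrow> (t = s \<or> s = Suc t \<or> (s = 0 \<and> t = k - 1))"
      using ZsA nz'' by blast
    let ?g = "gcyc \<rho> \<gamma> k"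
    let ?PB = "\<Prod>r\<in>UNIV - \<rho>`{..<k}. B r r"
    let ?sg = "of_int (sign (pcyc \<rho> k)) :: int"
    let ?P1 = "\<Prod>s<k. A' (\<rho> s) (\<gamma> s)"
    let ?P2 = "\<Prod>s<k. A' (\<rho> s) (\<gamma> (prv k s))"
    have ginj: "inj ?g" by (rule gcyc_inj[OF inj\<rho> inj\<gamma>])
    have d': "det (selm (blockmat B A') ?g) = ?PB * (?P1 + ?sg * ?P2)"
      by (rule cycle_det[where Z = A' and \<gamma> = \<gamma>, OF B_diag k2 inj\<rho> Zs'])
    have d'': "det (selm (blockmat B A'') ?g) = ?PB * ((\<Prod>s<k. A'' (\<rho> s) (\<gamma> s)) + ?sg * (\<Prod>s<k. A'' (\<rho> s) (\<gamma> (prv k s))))"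
      by (rule cycle_det[where Z = A'' and \<gamma> = \<gamma>, OF B_diag k2 inj\<rho> Zs''])
    have P1eq: "(\<Prod>s<k. A'' (\<rho> s) (\<gamma> s)) = ?P1"
      by (rule prod.cong) (use F1 in \<open>auto simp: F_def\<close>)
    obtain k0 where k0: "k = Suc k0" using k2 by (cases k) auto
    have hneg: "A'' (\<rho> 0) (\<gamma> (k - 1)) = - A' (\<rho> 0) (\<gamma> (k - 1))"
    proof -
      have "A' (\<rho> 0) (\<gamma> (k - 1)) \<noteq> A'' (\<rho> 0) (\<gamma> (k - 1))" using H1 by (simp add: H_def)
      moreover have "\<bar>A' (\<rho> 0) (\<gamma> (k - 1))\<bar> = \<bar>A'' (\<rho> 0) (\<gamma> (k - 1))\<bar>" using a1 a2 by simp
      ultimately show ?thesis by arith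
    qed
    have P2eq: "(\<Prod>s<k. A'' (\<rho> s) (\<gamma> (prv k s))) = - ?P2"
    proof -
      have "(\<Prod>s<k. A'' (\<rho> s) (\<gamma> (prv k s))) = A'' (\<rho> 0) (\<gamma> (prv k 0)) * (\<Prod>s<k0. A'' (\<rho> (Suc s)) (\<gamma> (prv k (Suc s))))"
        unfolding k0 by (rule prod.lessThan_Suc_shift)
      also have "(\<Prod>s<k0. A'' (\<rho> (Suc s)) (\<gamma> (prv k (Suc s)))) = (\<Prod>s<k0. A' (\<rho> (Suc s)) (\<gamma> (prv k (Suc s))))"
      proof (rule prod.cong)
        fix s assume "s \<in> {..<k0}"
        then have "Suc s < k" using k0 by simp
        then have "(\<rho> (Suc s), \<gamma> s) \<in> F" using F2 by blast
        then show "A'' (\<rho> (Suc s)) (\<gamma> (prv k (Suc s))) = A' (\<rho> (Suc s)) (\<gamma> (prv k (Suc s)))"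
          by (simp add: prv_def F_def)
      qed simp
      also have "A'' (\<rho> 0) (\<gamma> (prv k 0)) = - A' (\<rho> 0) (\<gamma> (prv k 0))" using hneg by (simp add: prv_def)
      also have "- A' (\<rho> 0) (\<gamma> (prv k 0)) * (\<Prod>s<k0. A' (\<rho> (Suc s)) (\<gamma> (prv k (Suc s)))) = - ?P2"
      proof -
        have "?P2 = A' (\<rho> 0) (\<gamma> (prv k 0)) * (\<Prod>s<k0. A' (\<rho> (Suc s)) (\<gamma> (prv k (Suc s))))"
          unfolding k0 by (rule prod.lessThan_Suc_shift)
        then show ?thesis by simp
      qed
      finally show ?thesis .
    qed
    have PBnz: "?PB \<noteq> 0" using Bnz by simp
    have P1nz: "?P1 \<noteq> 0" using Zs' by simp
    have P2nz: "?P2 \<noteq> 0"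
    proof -
      have "A' (\<rho> s) (\<gamma> (prv k s)) \<noteq> 0" if "s < k" for s
        using Zs'[OF that prv_lt[OF that]] that by (auto simp: prv_def)
      then show ?thesis by simp
    qed
    have sgnz: "?sg \<noteq> 0" by simp
    have "\<bar>det (selm (blockmat B A') ?g)\<bar> = \<bar>det (selm (blockmat B A'') ?g)\<bar>"
      using same_det[OF same' ginj] same_det[OF same'' ginj] by simp
    then have "\<bar>?PB * (?P1 + ?sg * ?P2)\<bar> = \<bar>?PB * (?P1 - ?sg * ?P2)\<bar>"
      unfolding d' d'' P1eq P2eq by simp
    then have "\<bar>?P1 + ?sg * ?P2\<bar> = \<bar>?P1 - ?sg * ?P2\<bar>" using PBnz by (simp add: abs_mult)
    moreover have "?sg * ?P2 \<noteq> 0" using sgnz P2nz by simp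
    ultimately show False using abs_pm P1nz by blast
  qed
  then show ?thesis by simp
qed

end
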